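(* Let $G=(V,E,s)$ be a flow graph with dominator tree $D$, let $(x,y)\in E$ with $x$ reachable from $s$, and let $G'$ be obtained from $G$ by deleting $(x,y)$, where $y$ is still reachable from $s$ in $G'$. If a vertex $v$ (reachable in both $G$ and $G'$) is affected by the deletion, i.e., $d'(v)\neq d(v)$, then $d(v)=d(y)$ and there is a path $P$ in $G$ from $y$ to $v$ such that $\mathit{depth}(d(v))<\mathit{depth}(w)$ for all vertices $w$ on $P$.
   Context: A flow graph $G=(V,E,s)$ is a directed graph with start vertex $s$; a vertex is reachable if there is a path from $s$ to it. For reachable vertices, $w$ dominates $v$ if every path from $s$ to $v$ contains $w$. The immediate dominator $d(v)$ of a reachable $v\neq s$ is the proper dominator of $v$ that is dominated by all other proper dominators of $v$. The dominator tree $D$ is the tree on the reachable vertices rooted at $s$ in which the parent of $v\neq s$ is $d(v)$; $\mathit{depth}(w)$ is the depth of $w$ in $D$ (the dominator tree of $G$, before the deletion). $d'(v)$ denotes the immediate dominator of $v$ in $G'$. *)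

theory Defs
  imports Main
begin

definition is_path :: "('v \<times> 'v) set \<Rightarrow> 'v list \<Rightarrow> bool" where
  "is_path E p \<longleftrightarrow> p \<noteq> [] \<and> (\<forall>i. Suc i < length p \<longrightarrow> (p ! i, p ! Suc i) \<in> E)"

definition flow_graph :: "'v set \<Rightarrow> ('v \<times> 'v) set \<Rightarrow> 'v \<Rightarrow> bool" where
  "flow_graph V E s \<longleftrightarrow> finite V \<and> E \<subseteq> V \<times> V \<and> s \<in> V"

definition reachable :: "('v \<times> 'v) set \<Rightarrow> 'v \<Rightarrow> 'v \<Rightarrow> bool" where
  "reachable E s v \<longleftrightarrow> (\<exists>p. is_path E p \<and> hd p = s \<and> last p = v)"

definition dominates :: "('v \<times> 'v) set \<Rightarrow> 'v \<Rightarrow> 'v \<Rightarrow> 'v \<Rightarrow> bool" where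
  "dominates E s w v \<longleftrightarrow> reachable E s w \<and> reachable E s v \<and>
     (\<forall>p. is_path E p \<and> hd p = s \<and> last p = v \<longrightarrow> w \<in> set p)"

definition idom :: "('v \<times> 'v) set \<Rightarrow> 'v \<Rightarrow> 'v \<Rightarrow> 'v" where
  "idom E s v = (THE w. w \<noteq> v \<and> dominates E s w v \<and>
      (\<forall>u. u \<noteq> v \<and> dominates E s u v \<longrightarrow> dominates E s u w))"

text \<open>Depth in the dominator tree (root s, parent of v is idom v): the number of
  parent steps needed to reach the root.\<close>
definition dt_depth :: "('v \<times> 'v) set \<Rightarrow> 'v \<Rightarrow> 'v \<Rightarrow> nat" where
  "dt_depth E s w = (LEAST k. (idom E s ^^ k) w = s)"

end

theory Submission
  imports Defs
begin

lemma is_path_Nil[simp]: "\<not> is_path E []" by (simp add: is_path_def)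
lemma is_path_single[simp]: "is_path E [a]" by (simp add: is_path_def)
lemma is_path_Cons2[simp]: "is_path E (a # b # p) \<longleftrightarrow> (a,b) \<in> E \<and> is_path E (b # p)"
proof
  assume h: "is_path E (a # b # p)"
  have "Suc 0 < length (a # b # p)" by simp
  then have "((a#b#p) ! 0, (a#b#p) ! Suc 0) \<in> E" using h unfolding is_path_def by blast
  then have "(a,b) \<in> E" by simp
  moreover have "is_path E (b # p)" unfolding is_path_def
  proof (intro conjI allI impI)
    fix i assume "Suc i < length (b # p)"
    then have "Suc (Suc i) < length (a # b # p)" by simp
    then have "((a#b#p) ! Suc i, (a#b#p) ! Suc (Suc i)) \<in> E" using h unfolding is_path_def by blast
    then show "((b # p) ! i, (b # p) ! Suc i) \<in> E" by simp
  qed simp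
  ultimately show "(a,b) \<in> E \<and> is_path E (b # p)" ..
next
  assume h: "(a,b) \<in> E \<and> is_path E (b # p)"
  show "is_path E (a # b # p)" unfolding is_path_def
  proof (intro conjI allI impI)
    fix i assume i: "Suc i < length (a # b # p)"
    show "((a # b # p) ! i, (a # b # p) ! Suc i) \<in> E"
    proof (cases i)
      case 0 then show ?thesis using h by simp
    next
      case (Suc j)
      then have "Suc j < length (b # p)" using i by simp
      then have "((b#p) ! j, (b#p) ! Suc j) \<in> E" using h unfolding is_path_def by blast
      then show ?thesis using Suc by simp
    qed
  qed simp
qed

lemma path_ne: "is_path E p \<Longrightarrow> p \<noteq> []" by (simp add: is_path_def)

lemma path_concat_path:
  "is_path E p \<Longrightarrow> is_path E q \<Longrightarrow> last p = hd q \<Longrightarrow> is_path E (p @ tl q)"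
proof (induction p rule: induct_list012)
  case 1 then show ?case by simp
next
  case (2 a) then have "q \<noteq> []" by (simp add: is_path_def)
  then show ?case using 2 by (cases q) auto
next
  case (3 a b p) then show ?case by simp
qed

lemma path_concat:
  assumes "is_path E p" "is_path E q" "last p = hd q"
  shows "is_path E (p @ tl q) \<and> hd (p @ tl q) = hd p \<and> last (p @ tl q) = last q
     \<and> set (p @ tl q) \<subseteq> set p \<union> set q"
proof -
  have p: "p \<noteq> []" and q: "q \<noteq> []" using assms path_ne by auto
  have "last (p @ tl q) = last q" using p q assms(3) by (cases q) (auto simp: last_append)
  moreover have "set (p @ tl q) \<subseteq> set p \<union> set q" by (cases q) auto
  ultimately show ?thesis using path_concat_path[OF assms] p by simp
qed

lemma path_take: "is_path E p \<Longrightarrow> 0 < n \<Longrightarrow> is_path E (take n p)"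
  unfolding is_path_def by auto

lemma path_drop: "is_path E p \<Longrightarrow> n < length p \<Longrightarrow> is_path E (drop n p)"
  unfolding is_path_def
proof (intro conjI allI impI)
  fix i assume h: "p \<noteq> [] \<and> (\<forall>i. Suc i < length p \<longrightarrow> (p ! i, p ! Suc i) \<in> E)" "n < length p"
    "Suc i < length (drop n p)"
  then have "Suc (n+i) < length p" by simp
  then have "(p ! (n+i), p ! Suc (n+i)) \<in> E" using h by blast
  then show "(drop n p ! i, drop n p ! Suc i) \<in> E" using h by simp
qed simp

lemma path_mono: "is_path E p \<Longrightarrow> E \<subseteq> E' \<Longrightarrow> is_path E' p"
  unfolding is_path_def by blast

lemma path_del: "is_path E p \<Longrightarrow> y \<notin> set (tl p) \<Longrightarrow> is_path (E - {(x,y)}) p"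
  unfolding is_path_def
proof (intro conjI allI impI)
  fix i assume h: "p \<noteq> [] \<and> (\<forall>i. Suc i < length p \<longrightarrow> (p ! i, p ! Suc i) \<in> E)" "y \<notin> set (tl p)"
    "Suc i < length p"
  then have il: "i < length (tl p)" by simp
  then have "tl p ! i \<in> set (tl p)" by (rule nth_mem)
  moreover have "tl p ! i = p ! Suc i" using il by (simp add: nth_tl)
  ultimately have "p ! Suc i \<in> set (tl p)" by simp
  then show "(p ! i, p ! Suc i) \<in> E - {(x, y)}" using h by auto
qed simp

lemma path_V: assumes "is_path E p" "E \<subseteq> V \<times> V" "hd p \<in> V" shows "set p \<subseteq> V"
proof
  fix a assume "a \<in> set p"
  then obtain k where k: "k < length p" "p ! k = a" by (metis in_set_conv_nth)
  show "a \<in> V"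
  proof (cases k)
    case 0 then show ?thesis using k assms path_ne by (metis hd_conv_nth)
  next
    case (Suc i)
    then have "(p ! i, p ! k) \<in> E" using assms(1) k unfolding is_path_def by blast
    then show ?thesis using assms(2) k by auto
  qed
qed

lemma last_take_Suc: "i < length p \<Longrightarrow> last (take (Suc i) p) = p ! i"
  by (metis last_snoc take_hd_drop hd_drop_conv_nth)

lemma prefix_path:
  assumes "is_path E p" "i < length p"
  shows "is_path E (take (Suc i) p) \<and> hd (take (Suc i) p) = hd p \<and> last (take (Suc i) p) = p ! i
    \<and> set (take (Suc i) p) \<subseteq> set p"
  using assms path_take[of E p "Suc i"] last_take_Suc[of i p] hd_take[of "Suc i" p] set_take_subset
  by (auto dest: in_set_takeD)

lemma suffix_path:
  assumes "is_path E p" "i < length p"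
  shows "is_path E (drop i p) \<and> hd (drop i p) = p ! i \<and> last (drop i p) = last p
    \<and> set (drop i p) \<subseteq> set p"
  using assms path_drop[of E p i] hd_drop_conv_nth last_drop set_drop_subset
  by (auto dest: in_set_dropD)

lemma first_occ: "a \<in> set p \<Longrightarrow> \<exists>i<length p. p ! i = a \<and> a \<notin> set (take i p)"
proof (induction p)
  case Nil then show ?case by simp
next
  case (Cons b p)
  show ?case
  proof (cases "a = b")
    case True then show ?thesis by (intro exI[of _ 0]) auto
  next
    case False
    then obtain i where "i < length p" "p ! i = a" "a \<notin> set (take i p)" using Cons by auto
    then show ?thesis using False by (intro exI[of _ "Suc i"]) auto
  qed
qed

lemma last_occ: "a \<in> set p \<Longrightarrow> \<exists>i<length p. p ! i = a \<and> a \<notin> set (drop (Suc i) p)"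
proof (induction p)
  case Nil then show ?case by simp
next
  case (Cons b p)
  show ?case
  proof (cases "a \<in> set p")
    case True
    then obtain i where "i < length p" "p ! i = a" "a \<notin> set (drop (Suc i) p)" using Cons by auto
    then show ?thesis by (intro exI[of _ "Suc i"]) auto
  next
    case False then show ?thesis using Cons by (intro exI[of _ 0]) auto
  qed
qed

lemma prefix_to:
  assumes "is_path E p" "a \<in> set p"
  shows "\<exists>q. is_path E q \<and> hd q = hd p \<and> last q = a \<and> set q \<subseteq> set p"
proof -
  obtain i where "i < length p" "p ! i = a" using assms by (metis in_set_conv_nth)
  then show ?thesis using prefix_path[OF assms(1)] by blast
qed

lemma suffix_from:
  assumes "is_path E p" "a \<in> set p"
  shows "\<exists>q. is_path E q \<and> hd q = a \<and> last q = last p \<and> set q \<subseteq> set p"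
proof -
  obtain i where "i < length p" "p ! i = a" using assms by (metis in_set_conv_nth)
  then show ?thesis using suffix_path[OF assms(1)] by blast
qed

lemma path_concat':
  assumes "is_path E p" "is_path E q" "last p = hd q"
  obtains r where "is_path E r" "hd r = hd p" "last r = last q" "set r \<subseteq> set p \<union> set q"
  using path_concat[OF assms] by blast

lemma reach_s: "reachable E s s"
  unfolding reachable_def by (intro exI[of _ "[s]"]) simp

lemma dom_refl: "reachable E s v \<Longrightarrow> dominates E s v v"
  unfolding dominates_def by (auto dest: path_ne)

lemma dom_s: "reachable E s v \<Longrightarrow> dominates E s s v"
  unfolding dominates_def using reach_s by (auto dest: path_ne)

lemma dom_of_s: assumes "dominates E s w s" shows "w = s"
proof -
  have "is_path E [s] \<and> hd [s] = s \<and> last [s] = s" by simp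
  then have "w \<in> set [s]" using assms unfolding dominates_def by blast
  then show ?thesis by simp
qed

lemma dom_reach: "dominates E s w v \<Longrightarrow> reachable E s w \<and> reachable E s v"
  unfolding dominates_def by blast

lemma domD2: "dominates E s w v \<Longrightarrow> is_path E p \<Longrightarrow> hd p = s \<Longrightarrow> last p = v \<Longrightarrow> w \<in> set p"
  unfolding dominates_def by blast

lemma not_domI: "is_path E p \<Longrightarrow> hd p = s \<Longrightarrow> last p = v \<Longrightarrow> w \<notin> set p \<Longrightarrow> \<not> dominates E s w v"
  unfolding dominates_def by blast

lemma not_domE:
  assumes "\<not> dominates E s w v" "reachable E s w" "reachable E s v"
  obtains p where "is_path E p" "hd p = s" "last p = v" "w \<notin> set p"
  using assms unfolding dominates_def by blast

lemma dom_mono: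
  assumes d: "dominates E s a b" and sub: "E' \<subseteq> E" and ra: "reachable E' s a" and rb: "reachable E' s b"
  shows "dominates E' s a b"
  unfolding dominates_def
proof (intro conjI allI impI ra rb)
  fix p assume p: "is_path E' p \<and> hd p = s \<and> last p = b"
  then have pE: "is_path E p" using path_mono[of E' p E] sub by blast
  show "a \<in> set p" using domD2[OF d pE] p by simp
qed

lemma dom_trans:
  assumes "dominates E s a b" "dominates E s b c" shows "dominates E s a c"
  unfolding dominates_def
proof (intro conjI allI impI)
  show "reachable E s a" using dom_reach[OF assms(1)] by simp
  show "reachable E s c" using dom_reach[OF assms(2)] by simp
  fix p assume p: "is_path E p \<and> hd p = s \<and> last p = c"
  then have "b \<in> set p" using assms(2) unfolding dominates_def by blast
  then obtain q where "is_path E q" "hd q = s" "last q = b" "set q \<subseteq> set p"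
    using prefix_to p by metis
  then show "a \<in> set p" using assms(1) unfolding dominates_def by blast
qed

lemma dom_antisym:
  assumes "dominates E s a b" "dominates E s b a" shows "a = b"
proof -
  obtain p where p: "is_path E p" "hd p = s" "last p = b"
    using dom_reach[OF assms(1)] unfolding reachable_def by blast
  have "a \<in> set p" using p assms(1) unfolding dominates_def by blast
  then obtain i where i: "i < length p" "p ! i = a" "a \<notin> set (take i p)" using first_occ by metis
  have pp: "is_path E (take (Suc i) p)" "hd (take (Suc i) p) = s" "last (take (Suc i) p) = a"
    using prefix_path[OF p(1) i(1)] p(2) i(2) by auto
  have bin: "b \<in> set (take (Suc i) p)"
    by (rule domD2[OF assms(2) pp])
  have tk: "take (Suc i) p = take i p @ [a]" using take_Suc_conv_app_nth[OF i(1)] unfolding i(2) .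
  have "b \<in> set (take i p @ [a])" using bin unfolding tk .
  then have "b = a \<or> b \<in> set (take i p)" by simp
  moreover have False if bt: "b \<in> set (take i p)" "b \<noteq> a"
  proof -
    obtain j where j: "j < length (take i p)" "take i p ! j = b" using bt(1) by (auto simp: in_set_conv_nth)
    then have ji: "j < i" "p ! j = b" by auto
    have pj: "is_path E (take (Suc j) p)" "hd (take (Suc j) p) = s" "last (take (Suc j) p) = b"
      using prefix_path[OF p(1), of j] p(2) ji i(1) by auto
    have "a \<in> set (take (Suc j) p)" by (rule domD2[OF assms(1) pj])
    moreover have "set (take (Suc j) p) \<subseteq> set (take i p)" using ji by (intro set_take_subset_set_take) simp
    ultimately show False using i by blast
  qed
  ultimately show ?thesis by blast
qed

lemma dom_chain:
  assumes a: "dominates E s a v" and b: "dominates E s b v" and nab: "\<not> dominates E s a b"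
  shows "dominates E s b a"
proof -
  have ra: "reachable E s a" using dom_reach[OF a] by simp
  have rb: "reachable E s b" using dom_reach[OF b] by simp
  have rv: "reachable E s v" using dom_reach[OF b] by simp
  obtain q where q: "is_path E q" "hd q = s" "last q = b" "a \<notin> set q"
    by (rule not_domE[OF nab ra rb])
  obtain p where p: "is_path E p" "hd p = s" "last p = v" using rv unfolding reachable_def by blast
  have "a \<in> set p" using p a unfolding dominates_def by blast
  then obtain i where i: "i < length p" "p ! i = a" "a \<notin> set (drop (Suc i) p)" using last_occ by metis
  define p1 where "p1 = drop i p"
  have p1: "is_path E p1" "hd p1 = a" "last p1 = v" "tl p1 = drop (Suc i) p"
    using suffix_path[OF p(1) i(1)] i p(3) unfolding p1_def by (simp_all add: drop_Suc tl_drop)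
  show ?thesis unfolding dominates_def
  proof (intro conjI allI impI rb ra)
    fix r assume r: "is_path E r \<and> hd r = s \<and> last r = a"
    show "b \<in> set r"
    proof (rule ccontr)
      assume br: "b \<notin> set r"
      have "is_path E (r @ tl p1)" "hd (r @ tl p1) = s" "last (r @ tl p1) = v"
        using path_concat[of E r p1] r p1 by auto
      then have "b \<in> set (r @ tl p1)" by (rule domD2[OF b])
      then have bd: "b \<in> set (drop (Suc i) p)" using br p1 by simp
      then have si: "Suc i < length p" by (metis drop_eq_Nil2 empty_iff empty_set not_le)
      have pd: "is_path E (drop (Suc i) p)" using path_drop[OF p(1) si] .
      obtain p2 where p2: "is_path E p2" "hd p2 = b" "last p2 = last (drop (Suc i) p)"
          "set p2 \<subseteq> set (drop (Suc i) p)"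
        using suffix_from[OF pd bd] by blast
      have "last (drop (Suc i) p) = v" using si p by (simp add: last_drop)
      then have "is_path E (q @ tl p2)" "hd (q @ tl p2) = s" "last (q @ tl p2) = v"
        using path_concat[of E q p2] q p2 by auto
      then have "a \<in> set (q @ tl p2)" by (rule domD2[OF a])
      moreover have "set (tl p2) \<subseteq> set p2" by (cases p2) auto
      ultimately show False using q p2 i by auto
    qed
  qed
qed

definition sdom :: "('v \<times> 'v) set \<Rightarrow> 'v \<Rightarrow> 'v \<Rightarrow> 'v set" where
  "sdom E s w = {u. u \<noteq> w \<and> dominates E s u w}"

lemma reach_V: assumes "flow_graph V E s" "reachable E s w" shows "w \<in> V"
proof -
  obtain p where p: "is_path E p" "hd p = s" "last p = w" using assms(2) unfolding reachable_def by blast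
  have "set p \<subseteq> V" using path_V[OF p(1)] assms(1) p(2) unfolding flow_graph_def by blast
  then show ?thesis using p path_ne[OF p(1)] by auto
qed

lemma dom_set_finite: assumes "flow_graph V E s" shows "finite {u. dominates E s u w}"
proof (rule finite_subset)
  show "{u. dominates E s u w} \<subseteq> V" using reach_V[OF assms] dom_reach by (metis (no_types, lifting) mem_Collect_eq subsetI)
  show "finite V" using assms unfolding flow_graph_def by blast
qed

lemma sdom_finite: "flow_graph V E s \<Longrightarrow> finite (sdom E s w)"
  unfolding sdom_def using dom_set_finite by (rule finite_subset[rotated]) auto

lemma idom_props:
  assumes G: "flow_graph V E s" and rv: "reachable E s v" and vs: "v \<noteq> s"
  shows "idom E s v \<noteq> v \<and> dominates E s (idom E s v) v \<and>
     (\<forall>u. u \<noteq> v \<and> dominates E s u v \<longrightarrow> dominates E s u (idom E s v))"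
proof -
  define S where "S = {u. u \<noteq> v \<and> dominates E s u v}"
  define f where "f = (\<lambda>a. card {t. dominates E s t a})"
  have fin: "finite S" using sdom_finite[OF G, of v] unfolding S_def sdom_def .
  have "s \<in> S" using dom_s[OF rv] vs unfolding S_def by auto
  then have ne: "S \<noteq> {}" by auto
  have "Max (f ` S) \<in> f ` S" using fin ne by (intro Max_in) auto
  then obtain a where a: "a \<in> S" "f a = Max (f ` S)" by (metis imageE)
  have amax: "\<forall>b\<in>S. f b \<le> f a" using a fin by auto
  have P: "a \<noteq> v \<and> dominates E s a v \<and> (\<forall>u. u \<noteq> v \<and> dominates E s u v \<longrightarrow> dominates E s u a)"
  proof (intro conjI allI impI)
    show "a \<noteq> v" "dominates E s a v" using a(1) S_def by auto
    fix u assume u: "u \<noteq> v \<and> dominates E s u v"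
    show "dominates E s u a"
    proof (rule ccontr)
      assume nu: "\<not> dominates E s u a"
      then have au: "dominates E s a u" using dom_chain[of E s u v a] u \<open>dominates E s a v\<close> by blast
      have sub: "{t. dominates E s t a} \<subseteq> {t. dominates E s t u}"
      proof
        fix t assume "t \<in> {t. dominates E s t a}"
        then have "dominates E s t a" by simp
        then have "dominates E s t u" using au by (rule dom_trans)
        then show "t \<in> {t. dominates E s t u}" by simp
      qed
      have "u \<in> {t. dominates E s t u}" using dom_refl[OF conjunct1[OF dom_reach[of E s u v]]] u by blast
      moreover have "u \<notin> {t. dominates E s t a}" using nu by simp
      ultimately have "{t. dominates E s t a} \<subset> {t. dominates E s t u}" using sub by blast
      then have fau: "f a < f u" unfolding f_def by (rule psubset_card_mono[OF dom_set_finite[OF G]])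
      have "u \<in> S" using u S_def by auto
      then have "f u \<le> f a" using amax by blast
      then show False using fau by simp
    qed
  qed
  have "idom E s v = a" unfolding idom_def
  proof (rule the_equality)
    show "a \<noteq> v \<and> dominates E s a v \<and> (\<forall>u. u \<noteq> v \<and> dominates E s u v \<longrightarrow> dominates E s u a)"
      using P .
    fix w assume w: "w \<noteq> v \<and> dominates E s w v \<and> (\<forall>u. u \<noteq> v \<and> dominates E s u v \<longrightarrow> dominates E s u w)"
    then have "dominates E s w a" "dominates E s a w" using P by blast+
    then show "w = a" by (rule dom_antisym)
  qed
  then show ?thesis using P by simp
qed

lemma sdom_s: "sdom E s s = {}" using dom_of_s[of E s] unfolding sdom_def by auto

lemma sdom_idom:
  assumes G: "flow_graph V E s" and rv: "reachable E s v" and vs: "v \<noteq> s"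
  shows "sdom E s (idom E s v) = sdom E s v - {idom E s v}"
proof -
  note I = idom_props[OF G rv vs]
  have I1: "idom E s v \<noteq> v" and I2: "dominates E s (idom E s v) v"
    and I3: "\<And>u. u \<noteq> v \<Longrightarrow> dominates E s u v \<Longrightarrow> dominates E s u (idom E s v)"
    using I by blast+
  show ?thesis unfolding sdom_def
  proof (intro set_eqI iffI)
    fix t assume t: "t \<in> {u. u \<noteq> idom E s v \<and> dominates E s u (idom E s v)}"
    then have "dominates E s t (idom E s v)" by simp
    then have "dominates E s t v" using I2 by (rule dom_trans)
    moreover have "t \<noteq> v"
    proof
      assume "t = v"
      then have "dominates E s v (idom E s v)" using t by simp
      then have "v = idom E s v" using I2 by (rule dom_antisym)
      then show False using I1 by simp
    qed
    ultimately show "t \<in> {u. u \<noteq> v \<and> dominates E s u v} - {idom E s v}" using t by auto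
  next
    fix t assume t: "t \<in> {u. u \<noteq> v \<and> dominates E s u v} - {idom E s v}"
    then have "dominates E s t (idom E s v)" using I3 by simp
    then show "t \<in> {u. u \<noteq> idom E s v \<and> dominates E s u (idom E s v)}" using t by simp
  qed
qed

lemma depth_aux:
  assumes G: "flow_graph V E s"
  shows "reachable E s w \<Longrightarrow> card (sdom E s w) = n \<Longrightarrow>
     (idom E s ^^ n) w = s \<and> (\<forall>k<n. (idom E s ^^ k) w \<noteq> s)"
proof (induction n arbitrary: w)
  case 0
  have "w = s"
  proof (rule ccontr)
    assume "w \<noteq> s"
    then have "s \<in> sdom E s w" using dom_s[OF "0.prems"(1)] unfolding sdom_def by auto
    then show False using "0.prems"(2) sdom_finite[OF G] by (metis card_0_eq empty_iff)
  qed
  then show ?case by simp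
next
  case (Suc n)
  have ws: "w \<noteq> s" using Suc.prems(2) sdom_s by (metis card.empty nat.distinct(1))
  note I = idom_props[OF G Suc.prems(1) ws]
  have ri: "reachable E s (idom E s w)" using dom_reach[of E s "idom E s w" w] I by blast
  have "idom E s w \<in> sdom E s w" using I unfolding sdom_def by auto
  then have "card (sdom E s (idom E s w)) = n"
    using sdom_idom[OF G Suc.prems(1) ws] Suc.prems(2) sdom_finite[OF G] by simp
  note IH = Suc.IH[OF ri this]
  have "(idom E s ^^ Suc n) w = (idom E s ^^ n) (idom E s w)" by (simp add: funpow_Suc_right del: funpow.simps)
  moreover have "\<forall>k<Suc n. (idom E s ^^ k) w \<noteq> s"
  proof (intro allI impI)
    fix k assume "k < Suc n"
    then show "(idom E s ^^ k) w \<noteq> s"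
    proof (cases k)
      case 0 then show ?thesis using ws by simp
    next
      case (Suc k')
      then have "(idom E s ^^ k) w = (idom E s ^^ k') (idom E s w)" by (simp add: funpow_Suc_right del: funpow.simps)
      then show ?thesis using IH Suc \<open>k < Suc n\<close> by simp
    qed
  qed
  ultimately show ?case using IH by simp
qed

lemma dt_depth_card:
  assumes G: "flow_graph V E s" and rw: "reachable E s w"
  shows "dt_depth E s w = card (sdom E s w)"
  unfolding dt_depth_def
proof (rule Least_equality)
  note D = depth_aux[OF G rw refl]
  show "(idom E s ^^ card (sdom E s w)) w = s" using D by blast
  fix m assume "(idom E s ^^ m) w = s"
  then show "card (sdom E s w) \<le> m" using D by (meson not_le)
qed

theorem lemma4:
  fixes V :: "'v set" and E :: "('v \<times> 'v) set" and s x y v :: 'v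
  assumes G: "flow_graph V E s"
    and xy: "(x, y) \<in> E"
    and x_reach: "reachable E s x"
    and y_reach': "reachable (E - {(x, y)}) s y"
    and v_reach: "reachable E s v"
    and v_reach': "reachable (E - {(x, y)}) s v"
    and v_ne_s: "v \<noteq> s"
    and affected: "idom (E - {(x, y)}) s v \<noteq> idom E s v"
  shows "idom E s v = idom E s y \<and>
    (\<exists>P. is_path E P \<and> hd P = y \<and> last P = v \<and>
       (\<forall>w\<in>set P. dt_depth E s (idom E s v) < dt_depth E s w))"
proof -
  define E' where "E' = E - {(x,y)}"
  have G': "flow_graph V E' s" using G unfolding flow_graph_def E'_def by blast
  have sub: "E' \<subseteq> E" unfolding E'_def by blast
  have pm: "\<And>p. is_path E' p \<Longrightarrow> is_path E p" by (rule path_mono[OF _ sub])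
  have reach_mono: "\<And>w. reachable E' s w \<Longrightarrow> reachable E s w"
  proof -
    fix w assume "reachable E' s w"
    then obtain p where "is_path E' p" "hd p = s" "last p = w" unfolding reachable_def by blast
    then show "reachable E s w" unfolding reachable_def using pm by blast
  qed
  have dom_transfer: "\<And>a b. dominates E s a b \<Longrightarrow> reachable E' s a \<Longrightarrow> reachable E' s b \<Longrightarrow> dominates E' s a b"
    by (rule dom_mono[OF _ sub])
  have pdel: "\<And>p. is_path E p \<Longrightarrow> y \<notin> set p \<Longrightarrow> is_path E' p"
  proof -
    fix p assume p: "is_path E p" "y \<notin> set p"
    have "set (tl p) \<subseteq> set p" by (cases p) auto
    then have "y \<notin> set (tl p)" using p(2) by blast
    then show "is_path E' p" unfolding E'_def by (rule path_del[OF p(1)])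
  qed
  have rv': "reachable E' s v" using v_reach' E'_def by simp
  have ry': "reachable E' s y" using y_reach' E'_def by simp
  define d where "d = idom E s v"
  define u where "u = idom E' s v"
  have Id: "d \<noteq> v \<and> dominates E s d v \<and> (\<forall>t. t \<noteq> v \<and> dominates E s t v \<longrightarrow> dominates E s t d)"
    using idom_props[OF G v_reach v_ne_s] unfolding d_def .
  have Iu: "u \<noteq> v \<and> dominates E' s u v \<and> (\<forall>t. t \<noteq> v \<and> dominates E' s t v \<longrightarrow> dominates E' s t u)"
    using idom_props[OF G' rv' v_ne_s] unfolding u_def .
  have Id_dom: "dominates E s d v" using Id by blast
  have Iu_dom: "dominates E' s u v" using Iu by blast
  have ud: "u \<noteq> d" using affected unfolding u_def d_def E'_def .
  have rd': "reachable E' s d"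
  proof -
    obtain p where p: "is_path E' p" "hd p = s" "last p = v" using rv' unfolding reachable_def by blast
    have "d \<in> set p" by (rule domD2[OF Id_dom pm[OF p(1)] p(2) p(3)])
    then obtain q where "is_path E' q" "hd q = hd p" "last q = d" using prefix_to[OF p(1)] by blast
    then show ?thesis using p(2) unfolding reachable_def by auto
  qed
  have dd'v: "dominates E' s d v" by (rule dom_transfer[OF Id_dom rd' rv'])
  have Iu3: "\<And>t. t \<noteq> v \<Longrightarrow> dominates E' s t v \<Longrightarrow> dominates E' s t u" using Iu by blast
  have Id3: "\<And>t. t \<noteq> v \<Longrightarrow> dominates E s t v \<Longrightarrow> dominates E s t d" using Id by blast
  have dv: "d \<noteq> v" using Id by blast
  have uv: "u \<noteq> v" using Iu by blast
  have du': "dominates E' s d u" by (rule Iu3[OF dv dd'v])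
  have ru': "reachable E' s u" using dom_reach[OF Iu_dom] by simp
  have u_not_dom_v: "\<not> dominates E s u v"
  proof
    assume h: "dominates E s u v"
    then have "dominates E s u d" by (rule Id3[OF uv])
    then have "dominates E' s u d" using ru' rd' by (rule dom_transfer)
    then have "u = d" using du' by (rule dom_antisym)
    then show False using ud by simp
  qed
  have ru: "reachable E s u" by (rule reach_mono[OF ru'])
  obtain R where R: "is_path E R" "hd R = s" "last R = v" "u \<notin> set R"
    by (rule not_domE[OF u_not_dom_v ru v_reach])
  have yR: "y \<in> set R"
  proof (rule ccontr)
    assume "y \<notin> set R"
    then have RE': "is_path E' R" by (rule pdel[OF R(1)])
    have "u \<in> set R" by (rule domD2[OF Iu_dom RE' R(2) R(3)])
    then show False using R by blast
  qed
  obtain i where i: "i < length R" "R ! i = y" "y \<notin> set (drop (Suc i) R)" using last_occ[OF yR] by blast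
  define Q where "Q = drop i R"
  have Q0: "is_path E Q" "hd Q = y" "last Q = v" "set Q \<subseteq> set R"
    using suffix_path[OF R(1) i(1)] i R unfolding Q_def by auto
  have "tl Q = drop (Suc i) R" unfolding Q_def by (simp add: drop_Suc tl_drop)
  then have QE': "is_path E' Q" using path_del[OF Q0(1), of y x] i(3) unfolding E'_def by simp
  have uQ: "u \<notin> set Q" using Q0 R by blast
  have uy': "dominates E' s u y"
    unfolding dominates_def
  proof (intro conjI allI impI ru' ry')
    fix p assume p: "is_path E' p \<and> hd p = s \<and> last p = y"
    show "u \<in> set p"
    proof (rule ccontr)
      assume up: "u \<notin> set p"
      have "is_path E' (p @ tl Q)" "hd (p @ tl Q) = s" "last (p @ tl Q) = v"
        using path_concat[of E' p Q] p QE' Q0 by auto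
      then have "u \<in> set (p @ tl Q)" by (rule domD2[OF Iu_dom])
      moreover have "set (tl Q) \<subseteq> set Q" by (cases Q) auto
      ultimately show False using up uQ by auto
    qed
  qed
  have dQ: "d \<notin> set Q"
  proof
    assume dq: "d \<in> set Q"
    obtain Q2 where Q2: "is_path E' Q2" "hd Q2 = d" "last Q2 = v" "set Q2 \<subseteq> set Q"
      using suffix_from[OF QE' dq] Q0 by metis
    have "\<not> dominates E' s u d"
    proof
      assume "dominates E' s u d"
      then have "u = d" using du' by (rule dom_antisym)
      then show False using ud by simp
    qed
    then obtain p1 where p1: "is_path E' p1" "hd p1 = s" "last p1 = d" "u \<notin> set p1"
      by (rule not_domE[OF _ ru' rd'])
    have "is_path E' (p1 @ tl Q2)" "hd (p1 @ tl Q2) = s" "last (p1 @ tl Q2) = v"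
      using path_concat[of E' p1 Q2] p1 Q2 by auto
    then have "u \<in> set (p1 @ tl Q2)" by (rule domD2[OF Iu_dom])
    moreover have "set (tl Q2) \<subseteq> set Q2" by (cases Q2) auto
    ultimately show False using p1 Q2 uQ by auto
  qed
  have rd: "reachable E s d" using dom_reach[OF Id_dom] by simp
  have dQw: "\<forall>w\<in>set Q. w \<noteq> d \<and> dominates E s d w \<and> reachable E s w"
  proof
    fix w assume wQ: "w \<in> set Q"
    have wd: "w \<noteq> d" using wQ dQ by blast
    obtain Qk where Qk: "is_path E Qk" "hd Qk = w" "last Qk = v" "set Qk \<subseteq> set Q"
      using suffix_from[OF Q0(1) wQ] Q0 by metis
    have rw: "reachable E s w"
      using prefix_to[OF R(1), of w] wQ Q0 R unfolding reachable_def by (metis subsetD)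
    have "dominates E s d w" unfolding dominates_def
    proof (intro conjI allI impI rd rw)
      fix r assume r: "is_path E r \<and> hd r = s \<and> last r = w"
      have "is_path E (r @ tl Qk)" "hd (r @ tl Qk) = s" "last (r @ tl Qk) = v"
        using path_concat[of E r Qk] r Qk by auto
      then have "d \<in> set (r @ tl Qk)" by (rule domD2[OF Id_dom])
      moreover have "set (tl Qk) \<subseteq> set Qk" by (cases Qk) auto
      ultimately show "d \<in> set r" using Qk dQ by auto
    qed
    then show "w \<noteq> d \<and> dominates E s d w \<and> reachable E s w" using wd rw by blast
  qed
  have yQ: "y \<in> set Q" using Q0 path_ne[OF Q0(1)] by (metis list.set_sel(1))
  then have dy: "y \<noteq> d" "dominates E s d y" "reachable E s y" using dQw by blast+
  have ys: "y \<noteq> s"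
  proof
    assume "y = s"
    then have "dominates E s d s" using dy(2) by simp
    then have "d = s" by (rule dom_of_s)
    then show False using dy(1) \<open>y = s\<close> by simp
  qed
  define z where "z = idom E s y"
  have Iy: "z \<noteq> y \<and> dominates E s z y \<and> (\<forall>t. t \<noteq> y \<and> dominates E s t y \<longrightarrow> dominates E s t z)"
    using idom_props[OF G dy(3) ys] unfolding z_def .
  have Iy_dom: "dominates E s z y" using Iy by blast
  obtain j where j: "j < length R" "R ! j = y" "y \<notin> set (take j R)" using first_occ[OF yR] by blast
  have j0: "0 < j"
  proof (rule ccontr)
    assume "\<not> 0 < j"
    then have "j = 0" by simp
    then have "y = s" using j R path_ne[OF R(1)] by (metis hd_conv_nth)
    then show False using ys by simp
  qed
  have TJ1: "is_path E' (take j R)" by (rule pdel[OF path_take[OF R(1) j0] j(3)])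
  have TJ2: "hd (take j R) = s" using hd_take[OF j0, of R] R(2) by (rule trans)
  have TJ3: "set (take j R) \<subseteq> set R" by (rule set_take_subset)
  note TJ = TJ1 TJ2 TJ3
  have pp: "is_path E (take (Suc j) R)" "hd (take (Suc j) R) = s" "last (take (Suc j) R) = y"
    using prefix_path[OF R(1) j(1)] R(2) j(2) by auto
  have "z \<in> set (take (Suc j) R)"
    by (rule domD2[OF Iy_dom pp])
  moreover have "take (Suc j) R = take j R @ [y]" using take_Suc_conv_app_nth[OF j(1)] unfolding j(2) .
  ultimately have "z \<in> set (take j R @ [y])" by simp
  moreover have "z \<noteq> y" using Iy by blast
  ultimately have zT: "z \<in> set (take j R)" by simp
  obtain zp where zp: "is_path E' zp" "hd zp = s" "last zp = z" "set zp \<subseteq> set (take j R)"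
    using prefix_to[OF TJ(1) zT] TJ(2) by metis
  have u_zp: "u \<notin> set zp" using zp TJ R by blast
  have rz': "reachable E' s z" using zp unfolding reachable_def by blast
  have nuz: "\<not> dominates E' s u z" by (rule not_domI[OF zp(1) zp(2) zp(3) u_zp])
  have zv: "z \<noteq> v"
  proof
    assume "z = v"
    then have "u \<in> set zp" using domD2[OF Iu_dom zp(1) zp(2)] zp(3) by simp
    then show False using u_zp by simp
  qed
  have zy': "dominates E' s z y" by (rule dom_transfer[OF Iy_dom rz' ry'])
  have zdomv: "dominates E s z v" unfolding dominates_def
  proof (intro conjI allI impI v_reach)
    show "reachable E s z" using dom_reach[OF Iy_dom] by simp
    fix P assume P: "is_path E P \<and> hd P = s \<and> last P = v"
    show "z \<in> set P"
    proof (rule ccontr)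
      assume zP: "z \<notin> set P"
      have yP: "y \<notin> set P"
      proof
        assume "y \<in> set P"
        then obtain q where q: "is_path E q" "hd q = s" "last q = y" "set q \<subseteq> set P"
          using prefix_to P by metis
        have "z \<in> set q" by (rule domD2[OF Iy_dom q(1) q(2) q(3)])
        then show False using q zP by blast
      qed
      then have PE': "is_path E' P" using P pdel by blast
      have "u \<in> set P" using domD2[OF Iu_dom PE'] P by simp
      then obtain q where q: "is_path E' q" "hd q = s" "last q = u" "set q \<subseteq> set P"
        using prefix_to PE' P by metis
      have "z \<notin> set q" using zP q(4) by blast
      then have "\<not> dominates E' s z u" by (rule not_domI[OF q(1) q(2) q(3)])
      then show False using dom_chain[OF uy' zy' nuz] by blast
    qed
  qed
  have Iy3: "\<And>t. t \<noteq> y \<Longrightarrow> dominates E s t y \<Longrightarrow> dominates E s t z" using Iy by blast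
  have "dominates E s z d" by (rule Id3[OF zv zdomv])
  moreover have "dominates E s d z"
  proof -
    have "d \<noteq> y" using dy(1) by simp
    then show ?thesis by (rule Iy3[OF _ dy(2)])
  qed
  ultimately have zd: "z = d" by (rule dom_antisym)
  have depth: "\<forall>w\<in>set Q. dt_depth E s d < dt_depth E s w"
  proof
    fix w assume wQ: "w \<in> set Q"
    have w: "w \<noteq> d" "dominates E s d w" "reachable E s w" using dQw wQ by blast+
    have "insert d (sdom E s d) \<subseteq> sdom E s w"
    proof
      fix t assume "t \<in> insert d (sdom E s d)"
      then consider "t = d" | "t \<noteq> d" "dominates E s t d" unfolding sdom_def by blast
      then show "t \<in> sdom E s w"
      proof cases
        case 1 then show ?thesis using w unfolding sdom_def by auto
      next
        case 2
        have "dominates E s t w" using 2(2) w(2) by (rule dom_trans)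
        moreover have "t \<noteq> w"
        proof
          assume "t = w"
          then have "dominates E s w d" using 2(2) by simp
          then have "w = d" using w(2) by (rule dom_antisym)
          then show False using w(1) by simp
        qed
        ultimately show ?thesis unfolding sdom_def by blast
      qed
    qed
    moreover have "d \<notin> sdom E s d" unfolding sdom_def by blast
    ultimately have "card (sdom E s d) < card (sdom E s w)"
    proof -
      have "card (insert d (sdom E s d)) \<le> card (sdom E s w)"
        using sdom_finite[OF G, of w] \<open>insert d (sdom E s d) \<subseteq> sdom E s w\<close> by (rule card_mono)
      moreover have "card (insert d (sdom E s d)) = Suc (card (sdom E s d))"
        using sdom_finite[OF G, of d] \<open>d \<notin> sdom E s d\<close> by simp
      ultimately show ?thesis by simp
    qed
    then show "dt_depth E s d < dt_depth E s w"
      using dt_depth_card[OF G rd] dt_depth_card[OF G w(3)] by simp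
  qed
  have e1: "idom E s v = idom E s y" using zd unfolding z_def d_def by simp
  have e2: "\<forall>w\<in>set Q. dt_depth E s (idom E s v) < dt_depth E s w" using depth unfolding d_def .
  show ?thesis
    by (rule conjI[OF e1], rule exI[of _ Q], intro conjI Q0(1) Q0(2) Q0(3) e2)
qed

end
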